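(* Let $K>0$, $K\neq 1$, and let \[ A_5=\begin{pmatrix} K & 1 & 1\\ 1 & K & 1\\ 1 & 1 & 1\end{pmatrix}. \] Then \[ S(A_5)=\begin{pmatrix} a & b & c\\ b & a & c\\ c & c & d\end{pmatrix} \] with \[ a=\frac{K\left(2K+1-\sqrt{4K+5}\right)}{2(K^2-1)},\quad b=\frac{2K+1-\sqrt{4K+5}}{2(K^2-1)},\quad d=\frac{K+2-\sqrt{4K+5}}{K-1},\quad c=\sqrt{bd}. \] Equivalently $S(A_5)=XA_5X$ with $X=\operatorname{diag}(x,x,z)$, $x^2=b$, $z^2=d$. Moreover $\lim_{K\to\infty}S(A_5)=I_3$.
   Context: For a positive $n\times n$ matrix $A$, the Sinkhorn limit $S(A)$ is the unique doubly stochastic matrix of the form $XAY$ with $X,Y$ positive diagonal matrices; it is the limit of alternately row scaling (dividing each row by its row sum) and column scaling (dividing each column by its column sum) starting from $A$. For a positive symmetric matrix $A$ there is a unique positive diagonal $X$ with $S(A)=XAX$. *)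

theory Defs
  imports "HOL-Analysis.Analysis"
begin

text \<open>Square matrices are represented as real^'n^'n (rows indexed first).\<close>

definition doubly_stochastic :: "real^'n^'n \<Rightarrow> bool" where
  "doubly_stochastic S \<longleftrightarrow> (\<forall>i j. S $ i $ j \<ge> 0)
      \<and> (\<forall>i. (\<Sum>j\<in>UNIV. S $ i $ j) = 1) \<and> (\<forall>j. (\<Sum>i\<in>UNIV. S $ i $ j) = 1)"

definition diag_mat :: "real^'n \<Rightarrow> real^'n^'n" where
  "diag_mat x = (\<chi> i j. if i = j then x $ i else 0)"

text \<open>Sinkhorn limit: the unique doubly stochastic matrix of the form X A Y,
  X, Y positive diagonal.\<close>
definition sinkhorn :: "real^'n^'n \<Rightarrow> real^'n^'n" where
  "sinkhorn A = (THE S. doubly_stochastic S \<and>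
      (\<exists>x y. (\<forall>i. x $ i > 0) \<and> (\<forall>i. y $ i > 0) \<and> S = diag_mat x ** A ** diag_mat y))"

definition A5 :: "real \<Rightarrow> real^3^3" where
  "A5 K = vector [vector [K, 1, 1], vector [1, K, 1], vector [1, 1, 1]]"

end

theory Submission
  imports Defs "HOL-Real_Asymp.Real_Asymp"
begin

lemma diag_mult_entry:
  "(diag_mat x ** A ** diag_mat y) $ i $ j = x$i * A$i$j * y$j"
proof -
  have ifz: "\<And>P a b. (if P then a else 0) * (b::real) = (if P then a*b else 0)"
    "\<And>P a b. b * (if P then a else 0) = (if P then b*a else (0::real))" by auto
  show ?thesis unfolding matrix_matrix_mult_def diag_mat_def
    by (simp add: ifz sum.delta sum.delta')
qed

lemma core_unique:
  fixes S T :: "'n::finite \<Rightarrow> 'n \<Rightarrow> real"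
  assumes pos: "\<And>i j. S i j > 0"
    and rowS: "\<And>i. (\<Sum>j\<in>UNIV. S i j) = 1"
    and colS: "\<And>j. (\<Sum>i\<in>UNIV. S i j) = 1"
    and p: "\<And>i. p i > 0" and q: "\<And>j. q j > 0"
    and T: "\<And>i j. T i j = p i * S i j * q j"
    and rowT: "\<And>i. (\<Sum>j\<in>UNIV. T i j) = 1"
    and colT: "\<And>j. (\<Sum>i\<in>UNIV. T i j) = 1"
  shows "T i j = S i j"
proof -
  have "Max (range p) \<in> range p" by (rule Max_in) auto
  then obtain i0 where i0: "p i0 = Max (range p)" by (metis rangeE)
  have pM: "p i \<le> p i0" for i unfolding i0 by (rule Max_ge) auto
  have "Min (range q) \<in> range q" by (rule Min_in) auto
  then obtain j0 where j0: "q j0 = Min (range q)" by (metis rangeE)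
  have qm: "q j0 \<le> q j" for j unfolding j0 by (rule Min_le) auto
  have "(\<Sum>j\<in>UNIV. p i0 * q j0 * S i0 j) \<le> (\<Sum>j\<in>UNIV. T i0 j)"
    unfolding T
    by (rule sum_mono) (use p pos qm in \<open>auto simp: mult_left_mono mult_right_mono\<close>)
  also have "\<dots> = 1" by (rule rowT)
  finally have le1: "p i0 * q j0 \<le> 1" by (simp add: sum_distrib_left[symmetric] rowS)
  have "1 = (\<Sum>i\<in>UNIV. T i j0)" by (simp add: colT)
  also have "\<dots> \<le> (\<Sum>i\<in>UNIV. p i0 * q j0 * S i j0)"
    unfolding T
    by (rule sum_mono) (use pM pos q in \<open>auto simp: mult_left_mono mult_right_mono\<close>)
  finally have ge1: "1 \<le> p i0 * q j0" by (simp add: sum_distrib_left[symmetric] colS)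
  have eq1: "p i0 * q j0 = 1" using le1 ge1 by simp
  have zero: "(\<Sum>j\<in>UNIV. S i0 j * (p i0 * q j - 1)) = 0"
  proof -
    have "(\<Sum>j\<in>UNIV. S i0 j * (p i0 * q j - 1)) = (\<Sum>j\<in>UNIV. T i0 j) - (\<Sum>j\<in>UNIV. S i0 j)"
      unfolding T by (simp add: sum_subtractf[symmetric] algebra_simps)
    then show ?thesis using rowT rowS by simp
  qed
  have nn: "\<forall>j\<in>UNIV. 0 \<le> S i0 j * (p i0 * q j - 1)"
  proof
    fix j
    have "p i0 * q j0 \<le> p i0 * q j" using qm p by (simp add: mult_left_mono less_imp_le)
    then show "0 \<le> S i0 j * (p i0 * q j - 1)" using eq1 pos[of i0 j] by (intro mult_nonneg_nonneg) auto
  qed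
  have "\<forall>j\<in>UNIV. S i0 j * (p i0 * q j - 1) = 0"
    using sum_nonneg_eq_0_iff[of UNIV "\<lambda>j. S i0 j * (p i0 * q j - 1)"] nn zero by simp
  then have qc: "p i0 * q j = 1" for j
  proof -
    assume h: "\<forall>j\<in>UNIV. S i0 j * (p i0 * q j - 1) = 0"
    then have "S i0 j * (p i0 * q j - 1) = 0" by blast
    then have "p i0 * q j - 1 = 0" using pos[of i0 j] by simp
    then show ?thesis by simp
  qed
  have qq: "q j = q j0" for j
  proof -
    have "p i0 * q j = p i0 * q j0" using qc[of j] eq1 by simp
    then show ?thesis using p[of i0] by simp
  qed
  have "1 = (\<Sum>k\<in>UNIV. T i k)" using rowT by simp
  also have "\<dots> = p i * q j0 * (\<Sum>k\<in>UNIV. S i k)"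
    unfolding T sum_distrib_left
  proof (rule sum.cong)
    fix k show "p i * S i k * q k = p i * q j0 * S i k" using qq[of k] by simp
  qed simp
  finally have "p i * q j = 1" using rowS qq[of j] by simp
  then show ?thesis unfolding T by (simp add: algebra_simps)
qed


lemma alg:
  fixes K s :: real
  assumes K: "K > 0" "K \<noteq> 1" and s: "s = sqrt (4*K+5)"
  shows "(2*K + 1 - s) / (2 * (K^2 - 1)) = 2 / (2*K+1+s)"
    "(K + 2 - s) / (K - 1) = (K+1) / (K+2+s)"
    "(s-3)/(2*(K-1)) = 2/(s+3)"
proof -
  have s0: "s > 0" using s K by simp
  have s2: "s^2 = 4*K+5" using s K by simp
  have k1: "K^2 - 1 \<noteq> 0" proof -
    have "K^2 - 1 = (K-1)*(K+1)" by (simp add: algebra_simps power2_eq_square)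
    then show ?thesis using K by simp
  qed
  have k2: "K - 1 \<noteq> 0" using K by simp
  have p1: "2*K+1+s \<noteq> 0" "K+2+s \<noteq> 0" "s+3 \<noteq> 0" using s0 K by auto
  show "(2*K + 1 - s) / (2 * (K^2 - 1)) = 2 / (2*K+1+s)"
    using k1 p1 s2 by (simp add: field_simps power2_eq_square; simp add: algebra_simps)
  show "(K + 2 - s) / (K - 1) = (K+1) / (K+2+s)"
    using k2 p1 s2 by (simp add: field_simps power2_eq_square; simp add: algebra_simps)
  show "(s-3)/(2*(K-1)) = 2/(s+3)"
    using k2 p1 s2 by (simp add: field_simps power2_eq_square; simp add: algebra_simps)
qed
lemma sinkhorn_eqI:
  fixes A S0 :: "real^'n^'n"
  assumes Apos: "\<And>i j. A$i$j > 0" and u: "\<And>i. u$i > 0" and v: "\<And>i. v$i > 0"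
    and S0: "S0 = diag_mat u ** A ** diag_mat v" and ds: "doubly_stochastic S0"
  shows "sinkhorn A = S0"
  unfolding sinkhorn_def
proof (rule the_equality)
  show "doubly_stochastic S0 \<and> (\<exists>x y. (\<forall>i. x $ i > 0) \<and> (\<forall>i. y $ i > 0) \<and> S0 = diag_mat x ** A ** diag_mat y)"
    using ds u v S0 by blast
next
  fix S assume "doubly_stochastic S \<and> (\<exists>x y. (\<forall>i. x $ i > 0) \<and> (\<forall>i. y $ i > 0) \<and> S = diag_mat x ** A ** diag_mat y)"
  then obtain x y where dsS: "doubly_stochastic S" and x: "\<forall>i. x$i > 0" and y: "\<forall>i. y$i > 0"
    and S: "S = diag_mat x ** A ** diag_mat y" by blast
  have "S$i$j = S0$i$j" for i j
  proof (rule core_unique[where S="\<lambda>i j. S0$i$j" and T="\<lambda>i j. S$i$j"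
        and p="\<lambda>i. x$i/u$i" and q="\<lambda>j. y$j/v$j"])
    show "\<And>i j. S0$i$j > 0" unfolding S0 diag_mult_entry using Apos u v by simp
    show "\<And>i. (\<Sum>j\<in>UNIV. S0$i$j) = 1" "\<And>j. (\<Sum>i\<in>UNIV. S0$i$j) = 1"
      using ds unfolding doubly_stochastic_def by auto
    show "\<And>i. (\<Sum>j\<in>UNIV. S$i$j) = 1" "\<And>j. (\<Sum>i\<in>UNIV. S$i$j) = 1"
      using dsS unfolding doubly_stochastic_def by auto
    show "\<And>i. x$i/u$i > 0" using x u by simp
    show "\<And>i. y$i/v$i > 0" using y v by simp
    fix i j
    show "S$i$j = x$i/u$i * S0$i$j * (y$j/v$j)"
      unfolding S S0 diag_mult_entry using u[of i] v[of j] by (simp add: field_simps)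
  qed
  then show "S = S0" by (simp add: vec_eq_iff)
qed

lemma key:
  fixes K :: real
  assumes K: "K > 0" "K \<noteq> 1"
  defines "a \<equiv> K * (2*K + 1 - sqrt (4*K + 5)) / (2 * (K^2 - 1))"
      and "b \<equiv> (2*K + 1 - sqrt (4*K + 5)) / (2 * (K^2 - 1))"
      and "d \<equiv> (K + 2 - sqrt (4*K + 5)) / (K - 1)"
  defines "c \<equiv> sqrt (b * d)"
  shows "sinkhorn (A5 K) = vector [vector [a, b, c], vector [b, a, c], vector [c, c, d]]
    \<and> (\<exists>x z. x > 0 \<and> z > 0 \<and> x^2 = b \<and> z^2 = d \<and>
           sinkhorn (A5 K) = diag_mat (vector [x, x, z]) ** A5 K ** diag_mat (vector [x, x, z]))"
proof -
  define s where "s = sqrt (4*K+5)"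
  have s0: "s > 0" using s_def K by simp
  have s2: "s * s = 4*K+5" using s_def K by simp
  note r = alg[OF K s_def]
  have b: "b = 2/(2*K+1+s)" unfolding b_def s_def[symmetric] by (rule r(1))
  have d: "d = (K+1)/(K+2+s)" unfolding d_def s_def[symmetric] by (rule r(2))
  have a: "a = K * b" unfolding a_def b_def by simp
  define c' where "c' = 2/(s+3)"
  have p1: "2*K+1+s > 0" "K+2+s > 0" "s+3 > 0" using s0 K by auto
  have bpos: "b > 0" unfolding b using p1 by simp
  have dpos: "d > 0" unfolding d using p1 K by simp
  have cpos: "c' > 0" unfolding c'_def using p1 by simp
  have e1: "b*(K+1) + c' = 1"
  proof -
    have h: "2*(K+1)*(s+3) + 2*(2*K+1+s) = (2*K+1+s)*(s+3)" using s2 by (simp add: algebra_simps)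
    have gen: "\<And>P R::real. P \<noteq> 0 \<Longrightarrow> R \<noteq> 0 \<Longrightarrow> 2*(K+1)*R + 2*P = P*R \<Longrightarrow> 2/P*(K+1) + 2/R = 1"
      by (simp add: field_simps)
    have "2/(2*K+1+s)*(K+1) + 2/(s+3) = 1" using p1 h by (intro gen) auto
    then show ?thesis unfolding b c'_def .
  qed
  have e2: "2*c' + d = 1"
  proof -
    have h: "4*(K+2+s) + (K+1)*(s+3) = (K+2+s)*(s+3)" using s2 by (simp add: algebra_simps)
    have gen: "\<And>Q R::real. Q \<noteq> 0 \<Longrightarrow> R \<noteq> 0 \<Longrightarrow> 4*Q + (K+1)*R = Q*R \<Longrightarrow> 2*(2/R) + (K+1)/Q = 1"
      by (simp add: field_simps)
    have "2*(2/(s+3)) + (K+1)/(K+2+s) = 1" using p1 h by (intro gen) auto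
    then show ?thesis unfolding d c'_def .
  qed
  have e3: "c'*c' = b*d"
  proof -
    have hR: "(s+3)*(s+3) = 4*K+14+6* s" using s2 by (simp add: algebra_simps)
    have hPQ: "(2*K+1+s)*(K+2+s) = 2*K*K+9*K+7+(3*K+3)* s" using s2 by (simp add: algebra_simps)
    have h: "4*((2*K+1+s)*(K+2+s)) = 2*(K+1)*((s+3)*(s+3))" unfolding hR hPQ by (simp add: algebra_simps)
    have gen: "\<And>P Q R::real. P \<noteq> 0 \<Longrightarrow> Q \<noteq> 0 \<Longrightarrow> R \<noteq> 0 \<Longrightarrow> 4*(P*Q) = 2*(K+1)*(R*R) \<Longrightarrow> (2/R)*(2/R) = 2/P*((K+1)/Q)"
      by (simp add: field_simps)
    have "(2/(s+3))*(2/(s+3)) = 2/(2*K+1+s)*((K+1)/(K+2+s))" using p1 h by (intro gen) auto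
    then show ?thesis unfolding b d c'_def .
  qed
  have cc: "c = c'" unfolding c_def e3[symmetric] using cpos by simp
  define x where "x = sqrt b"
  define z where "z = sqrt d"
  have xpos: "x > 0" and zpos: "z > 0" using bpos dpos x_def z_def by auto
  have hx: "x*x = b" using bpos x_def by simp
  have hz: "z*z = d" using dpos z_def by simp
  have hxz: "x*z = c" unfolding c_def x_def z_def by (simp add: real_sqrt_mult)
  define M :: "real^3^3" where "M = vector [vector [a, b, c], vector [b, a, c], vector [c, c, d]]"
  have Mform: "M = diag_mat (vector [x, x, z]) ** A5 K ** diag_mat (vector [x, x, z])"
    unfolding M_def by (simp add: vec_eq_iff forall_3 diag_mult_entry A5_def a hx hz hxz)
      (simp add: algebra_simps hx hz hxz)
  have dsM: "doubly_stochastic M"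
    unfolding doubly_stochastic_def M_def using e1 e2 cc a bpos dpos cpos K
    by (simp add: forall_3 sum_3 algebra_simps)
  have Apos0: "\<forall>i j. (A5 K)$i$j > 0" using K by (simp add: A5_def forall_3)
  have Apos: "\<And>i j. (A5 K)$i$j > 0" using Apos0 by blast
  have S: "sinkhorn (A5 K) = M"
  proof (rule sinkhorn_eqI[OF Apos _ _ Mform dsM])
    have vpos: "\<forall>i. (vector [x, x, z] :: real^3)$i > 0" using xpos zpos by (simp add: forall_3)
    show "\<And>i. (vector [x, x, z] :: real^3)$i > 0" using vpos by blast
    then show "\<And>i. (vector [x, x, z] :: real^3)$i > 0" .
  qed
  show ?thesis
  proof
    show "sinkhorn (A5 K) = vector [vector [a, b, c], vector [b, a, c], vector [c, c, d]]"
      using S M_def by simp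
    show "\<exists>x z. x > 0 \<and> z > 0 \<and> x^2 = b \<and> z^2 = d \<and>
           sinkhorn (A5 K) = diag_mat (vector [x, x, z]) ** A5 K ** diag_mat (vector [x, x, z])"
      using xpos zpos hx hz S Mform by (intro exI[of _ x] exI[of _ z]) (simp add: power2_eq_square)
  qed
qed

lemma la: "((\<lambda>L::real. L * (2*L + 1 - sqrt (4*L + 5)) / (2 * (L^2 - 1))) \<longlongrightarrow> 1) at_top" by real_asymp
lemma lb: "((\<lambda>L::real. (2*L + 1 - sqrt (4*L + 5)) / (2 * (L^2 - 1))) \<longlongrightarrow> 0) at_top" by real_asymp
lemma ld: "((\<lambda>L::real. (L + 2 - sqrt (4*L + 5)) / (L - 1)) \<longlongrightarrow> 1) at_top" by real_asymp
lemma lc: "((\<lambda>L::real. sqrt ((2*L + 1 - sqrt (4*L + 5)) / (2 * (L^2 - 1)) * ((L + 2 - sqrt (4*L + 5)) / (L - 1)))) \<longlongrightarrow> 0) at_top" by real_asymp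

theorem mainTheorem10:
  fixes K :: real
  assumes "K > 0" and "K \<noteq> 1"
  defines "a \<equiv> K * (2*K + 1 - sqrt (4*K + 5)) / (2 * (K^2 - 1))"
      and "b \<equiv> (2*K + 1 - sqrt (4*K + 5)) / (2 * (K^2 - 1))"
      and "d \<equiv> (K + 2 - sqrt (4*K + 5)) / (K - 1)"
  defines "c \<equiv> sqrt (b * d)"
  shows "sinkhorn (A5 K) = vector [vector [a, b, c], vector [b, a, c], vector [c, c, d]]
    \<and> (\<exists>x z. x > 0 \<and> z > 0 \<and> x^2 = b \<and> z^2 = d \<and>
           sinkhorn (A5 K) = diag_mat (vector [x, x, z]) ** A5 K ** diag_mat (vector [x, x, z]))
    \<and> ((\<lambda>L. sinkhorn (A5 L)) \<longlongrightarrow> mat 1) at_top"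
proof -
  define fa where "fa = (\<lambda>L::real. L * (2*L + 1 - sqrt (4*L + 5)) / (2 * (L^2 - 1)))"
  define fb where "fb = (\<lambda>L::real. (2*L + 1 - sqrt (4*L + 5)) / (2 * (L^2 - 1)))"
  define fd where "fd = (\<lambda>L::real. (L + 2 - sqrt (4*L + 5)) / (L - 1))"
  define fc where "fc = (\<lambda>L::real. sqrt (fb L * fd L))"
  define F :: "real \<Rightarrow> real^3^3" where
    "F = (\<lambda>L. vector [vector [fa L, fb L, fc L], vector [fb L, fa L, fc L], vector [fc L, fc L, fd L]])"
  have part1: "sinkhorn (A5 K) = vector [vector [a, b, c], vector [b, a, c], vector [c, c, d]]
    \<and> (\<exists>x z. x > 0 \<and> z > 0 \<and> x^2 = b \<and> z^2 = d \<and>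
           sinkhorn (A5 K) = diag_mat (vector [x, x, z]) ** A5 K ** diag_mat (vector [x, x, z]))"
    unfolding c_def a_def b_def d_def by (rule key[OF assms(1,2)])
  have ev: "eventually (\<lambda>L. F L = sinkhorn (A5 L)) at_top"
  proof (rule eventually_mono[OF eventually_gt_at_top[of 1]])
    fix L :: real assume "L > 1"
    then show "F L = sinkhorn (A5 L)" unfolding F_def fa_def fb_def fc_def fd_def
      using key[of L] by simp
  qed
  have ta: "(fa \<longlongrightarrow> 1) at_top" unfolding fa_def by (rule la)
  have tb: "(fb \<longlongrightarrow> 0) at_top" unfolding fb_def by (rule lb)
  have tc: "(fc \<longlongrightarrow> 0) at_top" unfolding fc_def fb_def fd_def by (rule lc)
  have td: "(fd \<longlongrightarrow> 1) at_top" unfolding fd_def by (rule ld)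
  have "(F \<longlongrightarrow> mat 1) at_top"
  proof (rule vec_tendstoI)
    fix i :: 3
    show "((\<lambda>L. F L $ i) \<longlongrightarrow> mat 1 $ i) at_top"
    proof (rule vec_tendstoI)
      fix j :: 3
      have "((\<lambda>L. F L $ i $ j) \<longlongrightarrow> (if i = j then 1 else 0)) at_top"
        using exhaust_3[of i] exhaust_3[of j]
        by (auto simp: F_def ta tb tc td)
      then show "((\<lambda>L. F L $ i $ j) \<longlongrightarrow> mat 1 $ i $ j) at_top"
        by (simp add: mat_def)
    qed
  qed
  then have "((\<lambda>L. sinkhorn (A5 L)) \<longlongrightarrow> mat 1) at_top"
    using tendsto_cong[OF ev] by simp
  with part1 show ?thesis by blast
qed

end
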